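(* There exists a function $\beta:\mathbb{N}\times\mathbb{N}\to\mathbb{N}$ with the following property. Let $G=(A,B,E)$ be a bipartite graph with $A=\{\ell_1,\dots,\ell_m\}$, and let $\mathcal{P}=\{P_1,\dots,P_m\}$ be a partition of $B$ such that (1) for every $i\in[m]$, $P_i\subseteq N_G(\ell_i)$; and (2) for every $i\in[m]$, $N_G(\ell_i)\cap P_j=\emptyset$ for all $j<i$ and $N_G(\ell_i)\cap P_j\neq\emptyset$ for all $j>i$. Suppose further that $m>\beta(a,b)$ for some $a,b\in\mathbb{N}$. Then $G$ contains the half-graph $H_a$ of order $a$ as an induced subgraph, or $G$ contains a $1$-subdivision of $K_b$ as an induced subgraph in which all principal vertices are in $A$.
   Context: $[m]=\{1,\dots,m\}$. The half-graph $H_a$ of order $a$ has vertices $u_1,\dots,u_a,v_1,\dots,v_a$ and edges $u_iv_j$ for $1\le i\le j\le a$. A $1$-subdivision of $K_b$ is obtained from the complete graph $K_b$ by replacing each edge by a path with one internal vertex; the original $b$ vertices are the principal vertices. *)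

theory Defs
  imports Main
begin

definition bipartite_graph :: "nat set \<Rightarrow> nat set \<Rightarrow> (nat \<Rightarrow> nat \<Rightarrow> bool) \<Rightarrow> bool" where
  "bipartite_graph A B E \<longleftrightarrow> finite A \<and> finite B \<and> A \<inter> B = {} \<and>
     (\<forall>x y. E x y \<longrightarrow> E y x) \<and>
     (\<forall>x y. E x y \<longrightarrow> (x \<in> A \<and> y \<in> B) \<or> (x \<in> B \<and> y \<in> A))"

definition nbhd :: "(nat \<Rightarrow> nat \<Rightarrow> bool) \<Rightarrow> nat \<Rightarrow> nat set" where
  "nbhd E x = {y. E x y}"

definition induced_embedding ::
  "('w \<Rightarrow> 'w \<Rightarrow> bool) \<Rightarrow> 'w set \<Rightarrow> (nat \<Rightarrow> nat \<Rightarrow> bool) \<Rightarrow> nat set \<Rightarrow> ('w \<Rightarrow> nat) \<Rightarrow> bool" where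
  "induced_embedding H W E V f \<longleftrightarrow> inj_on f W \<and> f ` W \<subseteq> V \<and>
     (\<forall>x\<in>W. \<forall>y\<in>W. x \<noteq> y \<longrightarrow> (E (f x) (f y) \<longleftrightarrow> H x y))"

text \<open>Half-graph H_a: u_i = Inl i, v_j = Inr j (1 \<le> i,j \<le> a), edges u_i v_j for i \<le> j.\<close>
definition half_graph_vertices :: "nat \<Rightarrow> (nat + nat) set" where
  "half_graph_vertices a = Inl ` {1..a} \<union> Inr ` {1..a}"

fun half_graph_edge :: "nat + nat \<Rightarrow> nat + nat \<Rightarrow> bool" where
  "half_graph_edge (Inl i) (Inr j) = (i \<le> j)"
| "half_graph_edge (Inr j) (Inl i) = (i \<le> j)"
| "half_graph_edge _ _ = False"

text \<open>1-subdivision of K_b: principal vertices Inl i (1 \<le> i \<le> b), subdivision vertex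
Inr (i,j) for 1 \<le> i < j \<le> b, adjacent exactly to Inl i and Inl j.\<close>
definition subdiv_vertices :: "nat \<Rightarrow> (nat + nat \<times> nat) set" where
  "subdiv_vertices b = Inl ` {1..b} \<union> Inr ` {(i, j). 1 \<le> i \<and> i < j \<and> j \<le> b}"

fun subdiv_edge :: "nat + nat \<times> nat \<Rightarrow> nat + nat \<times> nat \<Rightarrow> bool" where
  "subdiv_edge (Inl k) (Inr (i, j)) = (k = i \<or> k = j)"
| "subdiv_edge (Inr (i, j)) (Inl k) = (k = i \<or> k = j)"
| "subdiv_edge _ _ = False"

end

theory Submission
  imports Defs "HOL-Library.Ramsey"
begin


lemma bip_facts:
  assumes "bipartite_graph A B E"
  shows "A \<inter> B = {}" "\<And>x y. x \<in> A \<Longrightarrow> y \<in> A \<Longrightarrow> \<not> E x y"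
    "\<And>x y. x \<in> B \<Longrightarrow> y \<in> B \<Longrightarrow> \<not> E x y" "\<And>x y. E x y = E y x"
proof -
  have d: "A \<inter> B = {}" using assms unfolding bipartite_graph_def by blast
  have s: "\<forall>x y. E x y \<longrightarrow> E y x" using assms unfolding bipartite_graph_def by blast
  have bp: "\<forall>x y. E x y \<longrightarrow> (x \<in> A \<and> y \<in> B) \<or> (x \<in> B \<and> y \<in> A)"
    using assms unfolding bipartite_graph_def by blast
  show "A \<inter> B = {}" by (rule d)
  show "\<And>x y. x \<in> A \<Longrightarrow> y \<in> A \<Longrightarrow> \<not> E x y" using d bp by blast
  show "\<And>x y. x \<in> B \<Longrightarrow> y \<in> B \<Longrightarrow> \<not> E x y" using d bp by blast
  show "\<And>x y. E x y = E y x" using s by blast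
qed

lemma half_inj:
  assumes UA: "\<And>s. s \<in> {1..a} \<Longrightarrow> U s \<in> A"
    and VB: "\<And>t. t \<in> {1..a} \<Longrightarrow> V t \<in> B"
    and Uinj: "inj_on U {1..a}" and Vinj: "inj_on V {1..a}" and dis: "A \<inter> B = {}"
  shows "inj_on (case_sum U V) (half_graph_vertices a)"
proof (rule inj_onI)
  fix x y assume x: "x \<in> half_graph_vertices a" and y: "y \<in> half_graph_vertices a" and e: "case_sum U V x = case_sum U V y"
  have xc: "(\<exists>s. x = Inl s \<and> s \<in> {1..a}) \<or> (\<exists>s. x = Inr s \<and> s \<in> {1..a})"
    using x unfolding half_graph_vertices_def by blast
  have yc: "(\<exists>s. y = Inl s \<and> s \<in> {1..a}) \<or> (\<exists>s. y = Inr s \<and> s \<in> {1..a})"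
    using y unfolding half_graph_vertices_def by blast
  show "x = y"
    using xc yc
  proof (elim disjE exE conjE)
    fix s t assume xy: "x = Inl s" "s \<in> {1..a}" "y = Inl t" "t \<in> {1..a}"
    then have "U s = U t" using e by simp
    then have "s = t" using inj_onD[OF Uinj _ xy(2) xy(4)] by blast
    then show ?thesis using xy by simp
  next
    fix s t assume xy: "x = Inl s" "s \<in> {1..a}" "y = Inr t" "t \<in> {1..a}"
    have "U s \<in> A" using UA xy(2) .
    moreover have "V t \<in> B" using VB xy(4) .
    moreover have "U s = V t" using e xy(1,3) by simp
    ultimately have "V t \<in> A \<inter> B" by simp
    then show ?thesis using dis by simp
  next
    fix s t assume xy: "x = Inr s" "s \<in> {1..a}" "y = Inl t" "t \<in> {1..a}"
    have "U t \<in> A" using UA xy(4) .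
    moreover have "V s \<in> B" using VB xy(2) .
    moreover have "V s = U t" using e xy(1,3) by simp
    ultimately have "V s \<in> A \<inter> B" by simp
    then show ?thesis using dis by simp
  next
    fix s t assume xy: "x = Inr s" "s \<in> {1..a}" "y = Inr t" "t \<in> {1..a}"
    then have "V s = V t" using e by simp
    then have "s = t" using inj_onD[OF Vinj _ xy(2) xy(4)] by blast
    then show ?thesis using xy by simp
  qed
qed

lemma half_from:
  assumes bg: "bipartite_graph A B E"
    and UA: "\<And>s. s \<in> {1..a} \<Longrightarrow> U s \<in> A"
    and VB: "\<And>t. t \<in> {1..a} \<Longrightarrow> V t \<in> B"
    and Uinj: "inj_on U {1..a}"
    and adj: "\<And>s t. s \<in> {1..a} \<Longrightarrow> t \<in> {1..a} \<Longrightarrow> E (U s) (V t) \<longleftrightarrow> s \<le> t"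
  shows "\<exists>f. induced_embedding half_graph_edge (half_graph_vertices a) E (A \<union> B) f"
proof -
  note bf = bip_facts[OF bg]
  have Vinj: "inj_on V {1..a}"
  proof (rule inj_onI)
    fix x y assume x: "x \<in> {1..a}" and y: "y \<in> {1..a}" and e: "V x = V y"
    have "x \<le> y" using adj[OF x y] adj[OF x x] e by simp
    moreover have "y \<le> x" using adj[OF y x] adj[OF y y] e by simp
    ultimately show "x = y" by simp
  qed
  have "induced_embedding half_graph_edge (half_graph_vertices a) E (A \<union> B) (case_sum U V)"
    unfolding induced_embedding_def
  proof (intro conjI ballI impI)
    show "inj_on (case_sum U V) (half_graph_vertices a)"
      by (rule half_inj[OF UA VB Uinj Vinj bf(1)])
    show "case_sum U V ` half_graph_vertices a \<subseteq> A \<union> B"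
      using UA VB unfolding half_graph_vertices_def by auto
    fix x y assume x: "x \<in> half_graph_vertices a" and y: "y \<in> half_graph_vertices a" and "x \<noteq> y"
    have xc: "(\<exists>s. x = Inl s \<and> s \<in> {1..a}) \<or> (\<exists>s. x = Inr s \<and> s \<in> {1..a})"
      using x unfolding half_graph_vertices_def by blast
    have yc: "(\<exists>s. y = Inl s \<and> s \<in> {1..a}) \<or> (\<exists>s. y = Inr s \<and> s \<in> {1..a})"
      using y unfolding half_graph_vertices_def by blast
    show "E (case_sum U V x) (case_sum U V y) = half_graph_edge x y"
      using xc yc
    proof (elim disjE exE conjE)
      fix s t assume xy: "x = Inl s" "s \<in> {1..a}" "y = Inl t" "t \<in> {1..a}"
      have "\<not> E (U s) (U t)" using bf(2) UA xy(2) UA xy(4) by metis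
      then show ?thesis using xy(1,3) by simp
    next
      fix s t assume xy: "x = Inl s" "s \<in> {1..a}" "y = Inr t" "t \<in> {1..a}"
      have "E (U s) (V t) = (s \<le> t)" using adj xy(2,4) by metis
      then show ?thesis using xy(1,3) by simp
    next
      fix s t assume xy: "x = Inr s" "s \<in> {1..a}" "y = Inl t" "t \<in> {1..a}"
      have "E (V s) (U t) = (t \<le> s)" using adj xy(2,4) bf(4) by metis
      then show ?thesis using xy(1,3) by simp
    next
      fix s t assume xy: "x = Inr s" "s \<in> {1..a}" "y = Inr t" "t \<in> {1..a}"
      have "\<not> E (V s) (V t)" using bf(3) VB xy(2) VB xy(4) by metis
      then show ?thesis using xy(1,3) by simp
    qed
  qed
  then show ?thesis by blast
qed

definition sdf :: "(nat \<Rightarrow> nat) \<Rightarrow> (nat \<Rightarrow> nat \<Rightarrow> nat) \<Rightarrow> nat + nat \<times> nat \<Rightarrow> nat" where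
  "sdf U V x = (case x of Inl s \<Rightarrow> U s | Inr p \<Rightarrow> V (fst p) (snd p))"

lemma sdf_simps[simp]: "sdf U V (Inl s) = U s" "sdf U V (Inr (i, j)) = V i j"
  by (simp_all add: sdf_def)

lemma subdiv_mem: "x \<in> subdiv_vertices b \<Longrightarrow> (\<exists>s. x = Inl s \<and> s \<in> {1..b}) \<or> (\<exists>i j. x = Inr (i, j) \<and> 1 \<le> i \<and> i < j \<and> j \<le> b)"
  unfolding subdiv_vertices_def by auto

lemma subdiv_from:
  assumes bg: "bipartite_graph A B E"
    and UA: "\<And>s. s \<in> {1..b} \<Longrightarrow> U s \<in> A"
    and VB: "\<And>i j. 1 \<le> i \<Longrightarrow> i < j \<Longrightarrow> j \<le> b \<Longrightarrow> V i j \<in> B"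
    and Uinj: "inj_on U {1..b}"
    and adj: "\<And>k i j. k \<in> {1..b} \<Longrightarrow> 1 \<le> i \<Longrightarrow> i < j \<Longrightarrow> j \<le> b \<Longrightarrow> E (U k) (V i j) \<longleftrightarrow> (k = i \<or> k = j)"
  shows "\<exists>f. induced_embedding subdiv_edge (subdiv_vertices b) E (A \<union> B) f \<and>
           (\<forall>i\<in>{1..b}. f (Inl i) \<in> A)"
proof -
  note bf = bip_facts[OF bg]
  have Vinj: "i = i' \<and> j = j'" if "1 \<le> i" "i < j" "j \<le> b" "1 \<le> i'" "i' < j'" "j' \<le> b" "V i j = V i' j'" for i j i' j'
  proof -
    have h: "\<And>k. k \<in> {1..b} \<Longrightarrow> (k = i \<or> k = j) \<longleftrightarrow> (k = i' \<or> k = j')"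
      using adj that by metis
    have "i = i' \<or> i = j'" using h[of i] that by auto
    moreover have "i' = i \<or> i' = j" using h[of i'] that by auto
    moreover have "j = i' \<or> j = j'" using h[of j] that by auto
    ultimately show ?thesis using that by auto
  qed
  have "induced_embedding subdiv_edge (subdiv_vertices b) E (A \<union> B) (sdf U V)"
    unfolding induced_embedding_def
  proof (intro conjI ballI impI)
    show "inj_on (sdf U V) (subdiv_vertices b)"
    proof (rule inj_onI)
      fix x y assume x: "x \<in> subdiv_vertices b" and y: "y \<in> subdiv_vertices b" and e: "sdf U V x = sdf U V y"
      show "x = y"
        using subdiv_mem[OF x] subdiv_mem[OF y]
      proof (elim disjE exE conjE)
        fix s t assume xy: "x = Inl s" "s \<in> {1..b}" "y = Inl t" "t \<in> {1..b}"
        have "U s = U t" using e xy(1,3) by simp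
        then have "s = t" using inj_onD[OF Uinj _ xy(2) xy(4)] by blast
        then show ?thesis using xy by simp
      next
        fix s i j assume xy: "x = Inl s" "s \<in> {1..b}" "y = Inr (i, j)" "1 \<le> i" "i < j" "j \<le> b"
        have "U s \<in> A" using UA xy(2) .
        moreover have "V i j \<in> B" using VB xy(4,5,6) .
        moreover have "U s = V i j" using e xy(1,3) by simp
        ultimately have "V i j \<in> A \<inter> B" by simp
        then show ?thesis using bf(1) by simp
      next
        fix s i j assume xy: "y = Inl s" "s \<in> {1..b}" "x = Inr (i, j)" "1 \<le> i" "i < j" "j \<le> b"
        have "U s \<in> A" using UA xy(2) .
        moreover have "V i j \<in> B" using VB xy(4,5,6) .
        moreover have "V i j = U s" using e xy(1,3) by simp
        ultimately have "V i j \<in> A \<inter> B" by simp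
        then show ?thesis using bf(1) by simp
      next
        fix i j i' j' assume xy: "x = Inr (i, j)" "1 \<le> i" "i < j" "j \<le> b" "y = Inr (i', j')" "1 \<le> i'" "i' < j'" "j' \<le> b"
        have "V i j = V i' j'" using e xy(1,5) by simp
        then have "i = i' \<and> j = j'" using Vinj[of i j i' j'] xy(2,3,4,6,7,8) by blast
        then show ?thesis using xy(1,5) by simp
      qed
    qed
    show "sdf U V ` subdiv_vertices b \<subseteq> A \<union> B"
      using UA VB unfolding subdiv_vertices_def by auto
    fix x y assume x: "x \<in> subdiv_vertices b" and y: "y \<in> subdiv_vertices b" and "x \<noteq> y"
    show "E (sdf U V x) (sdf U V y) = subdiv_edge x y"
      using subdiv_mem[OF x] subdiv_mem[OF y]
    proof (elim disjE exE conjE)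
      fix s t assume xy: "x = Inl s" "s \<in> {1..b}" "y = Inl t" "t \<in> {1..b}"
      have "\<not> E (U s) (U t)" using bf(2) UA xy(2) UA xy(4) by metis
      then show ?thesis using xy(1,3) by simp
    next
      fix s i j assume xy: "x = Inl s" "s \<in> {1..b}" "y = Inr (i, j)" "1 \<le> i" "i < j" "j \<le> b"
      have "E (U s) (V i j) = (s = i \<or> s = j)" using adj[of s i j] xy(2,4,5,6) by blast
      then show ?thesis using xy(1,3) by simp
    next
      fix s i j assume xy: "y = Inl s" "s \<in> {1..b}" "x = Inr (i, j)" "1 \<le> i" "i < j" "j \<le> b"
      have "E (V i j) (U s) = (s = i \<or> s = j)" using adj[of s i j] xy(2,4,5,6) bf(4)[of "V i j" "U s"] by blast
      then show ?thesis using xy(1,3) by simp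
    next
      fix i j i' j' assume xy: "x = Inr (i, j)" "1 \<le> i" "i < j" "j \<le> b" "y = Inr (i', j')" "1 \<le> i'" "i' < j'" "j' \<le> b"
      have "\<not> E (V i j) (V i' j')" using bf(3) VB[OF xy(2,3,4)] VB[OF xy(6,7,8)] by metis
      then show ?thesis using xy(1,5) by simp
    qed
  qed
  moreover have "\<forall>i\<in>{1..b}. sdf U V (Inl i) \<in> A" using UA by auto
  ultimately show ?thesis by blast
qed



lemma main_core:
  fixes N K :: nat
  assumes R: "partn_lst {..<N} [K,K,K] 3" and K: "K = a + b + 1"
    and bg: "bipartite_graph A B E"
    and linj: "inj_on l {1..m}" and Adef: "A = l ` {1..m}"
    and Pdis: "\<forall>i\<in>{1..m}. \<forall>j\<in>{1..m}. i \<noteq> j \<longrightarrow> P i \<inter> P j = {}"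
    and PB: "(\<Union>i\<in>{1..m}. P i) = B"
    and Pn: "\<forall>i\<in>{1..m}. P i \<subseteq> nbhd E (l i)"
    and bkw: "\<forall>i\<in>{1..m}. \<forall>j\<in>{1..m}. j < i \<longrightarrow> nbhd E (l i) \<inter> P j = {}"
    and fwd: "\<forall>i\<in>{1..m}. \<forall>j\<in>{1..m}. i < j \<longrightarrow> nbhd E (l i) \<inter> P j \<noteq> {}"
    and mN: "m > N"
  shows "(\<exists>f. induced_embedding half_graph_edge (half_graph_vertices a) E (A \<union> B) f) \<or>
      (\<exists>f. induced_embedding subdiv_edge (subdiv_vertices b) E (A \<union> B) f \<and>
           (\<forall>i\<in>{1..b}. f (Inl i) \<in> A))"
proof -
  have P_adj: "\<And>p v. p \<in> {1..m} \<Longrightarrow> v \<in> P p \<Longrightarrow> E (l p) v"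
    using Pn unfolding nbhd_def by blast
  have P_nadj: "\<And>p q v. p \<in> {1..m} \<Longrightarrow> q \<in> {1..m} \<Longrightarrow> p < q \<Longrightarrow> v \<in> P p \<Longrightarrow> \<not> E (l q) v"
    using bkw unfolding nbhd_def by blast
  have ex_w: "\<exists>v. v \<in> P (y+1) \<and> E (l (x+1)) v" if "x < y" "y < N" for x y
  proof -
    have xm: "x+1 \<in> {1..m}" and ym: "y+1 \<in> {1..m}" using that mN by auto
    have "nbhd E (l (x+1)) \<inter> P (y+1) \<noteq> {}" using fwd xm ym that(1) by simp
    then show ?thesis unfolding nbhd_def by blast
  qed
  define w where "w x y = (SOME v. v \<in> P (y+1) \<and> E (l (x+1)) v)" for x y
  have w: "w x y \<in> P (y+1) \<and> E (l (x+1)) (w x y)" if "x < y" "y < N" for x y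
    unfolding w_def using someI_ex[OF ex_w[OF that]] .
  define cf where "cf x y z = (if E (l (y+1)) (w x z) then 0 else if E (l (x+1)) (w y z) then 2 else (1::nat))" for x y z
  have cf0: "E (l (y+1)) (w x z)" if "cf x y z = 0" for x y z
    using that unfolding cf_def by (cases "E (l (y+1)) (w x z)"; cases "E (l (x+1)) (w y z)") auto
  have cf1: "\<not> E (l (y+1)) (w x z) \<and> \<not> E (l (x+1)) (w y z)" if "cf x y z = 1" for x y z
    using that unfolding cf_def by (cases "E (l (y+1)) (w x z)"; cases "E (l (x+1)) (w y z)") auto
  have cf2: "\<not> E (l (y+1)) (w x z) \<and> E (l (x+1)) (w y z)" if "cf x y z = 2" for x y z
    using that unfolding cf_def by (cases "E (l (y+1)) (w x z)"; cases "E (l (x+1)) (w y z)") auto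
  define col where "col T = cf (Min T) (Max (T - {Max T})) (Max T)" for T
  have col3: "col {x,y,z} = cf x y z" if "x < y" "y < z" for x y z
  proof -
    have "Min {x,y,z} = x" "Max {x,y,z} = z" using that by (auto simp: min_def max_def)
    moreover have "{x,y,z} - {z} = {x,y}" using that by auto
    moreover have "Max {x,y} = y" using that by (auto simp: max_def)
    ultimately show ?thesis unfolding col_def by simp
  qed
  have colPi: "col \<in> nsets {..<N} 3 \<rightarrow> {..<length [K,K,K]}"
    unfolding col_def cf_def by auto
  obtain c H where c: "c < length [K,K,K]" and H: "H \<in> nsets {..<N} ([K,K,K]!c)"
    and Hc: "col ` (nsets H 3) \<subseteq> {c}"
    using partn_lstE[OF R colPi refl] by blast
  have cK: "[K,K,K]!c = K" using c by (cases c) (auto simp: less_Suc_eq nth_Cons split: nat.split)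
  have Hfin: "finite H" and Hcard: "card H = K" and HN: "H \<subseteq> {..<N}"
    using H unfolding nsets_def cK by auto
  define hs where "hs = sorted_list_of_set H"
  define h where "h t = hs ! t" for t
  have hs_len: "length hs = K" unfolding hs_def using Hfin Hcard by simp
  have hs_sort: "sorted_wrt (<) hs" unfolding hs_def by simp
  have hs_set: "set hs = H" unfolding hs_def using Hfin by simp
  have h_mono: "h t < h s" if "t < s" "s < K" for t s
    unfolding h_def using sorted_wrt_nth_less[OF hs_sort that(1)] that hs_len by simp
  have h_H: "h t \<in> H" if "t < K" for t
    unfolding h_def using that hs_len hs_set nth_mem by blast
  have h_N: "h t < N" if "t < K" for t using h_H[OF that] HN by blast
  have h_m: "h t + 1 \<in> {1..m}" if "t < K" for t using h_N[OF that] mN by simp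
  have colh: "cf (h t1) (h t2) (h t3) = c" if "t1 < t2" "t2 < t3" "t3 < K" for t1 t2 t3
  proof -
    have lt: "h t1 < h t2" "h t2 < h t3" using h_mono that by auto
    have "{h t1, h t2, h t3} \<in> nsets H 3"
      unfolding nsets_def using lt h_H that by (auto simp: card_insert_if)
    then have "col {h t1, h t2, h t3} = c" using Hc by blast
    then show ?thesis using col3[OF lt] by simp
  qed
  define L where "L t = l (h t + 1)" for t
  define W where "W t s = w (h t) (h s)" for t s
  have WP: "W t s \<in> P (h s + 1)" and Wadj: "E (L t) (W t s)" if "t < s" "s < K" for t s
    using w[OF h_mono[OF that] h_N[OF that(2)]] unfolding W_def L_def by auto
  have Wtop: "E (L s) (W t s)" if "t < s" "s < K" for t s
    using P_adj[OF h_m[OF that(2)] WP[OF that]] unfolding L_def .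
  have Wnadj: "\<not> E (L r) (W t s)" if "t < s" "s < r" "r < K" for t s r
  proof -
    have sK: "s < K" using that by simp
    have "h s + 1 < h r + 1" using h_mono[OF that(2,3)] by simp
    then show ?thesis using P_nadj[OF h_m[OF sK] h_m[OF that(3)] _ WP[OF that(1) sK]] unfolding L_def by blast
  qed
  have LA: "L t \<in> A" if "t < K" for t using h_m[OF that] Adef unfolding L_def by blast
  have WB: "W t s \<in> B" if "t < s" "s < K" for t s using WP[OF that] h_m[OF that(2)] PB by blast
  have Linj: "L t = L s \<Longrightarrow> t < K \<Longrightarrow> s < K \<Longrightarrow> t = s" for t s
  proof -
    assume e: "L t = L s" and ts: "t < K" "s < K"
    have "l (h t + 1) = l (h s + 1)" using e unfolding L_def .
    then have "h t + 1 = h s + 1" using inj_onD[OF linj _ h_m[OF ts(1)] h_m[OF ts(2)]] by blast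
    then have hh: "h t = h s" by simp
    show "t = s"
    proof (rule ccontr)
      assume "t \<noteq> s"
      then have "t < s \<or> s < t" by arith
      then show False using h_mono[of t s] h_mono[of s t] ts hh by auto
    qed
  qed
  have LinjI: "inj_on (\<lambda>s. L (s - d)) {1..n}" if "n < K" "d \<le> 1" for d n
  proof (rule inj_onI)
    fix x y assume x: "x \<in> {1..n}" and y: "y \<in> {1..n}" and e: "L (x - d) = L (y - d)"
    have "x - d < K" "y - d < K" using x y that by auto
    then have "x - d = y - d" using Linj[OF e] by blast
    then show "x = y" using x y that(2) by auto
  qed
  have c012: "c = 0 \<or> c = 1 \<or> c = 2" using c by auto
  then show ?thesis
  proof (elim disjE)
    assume c0: "c = 0"
    have adj: "E (L s) (W 0 t) \<longleftrightarrow> s \<le> t" if "s \<in> {1..a}" "t \<in> {1..a}" for s t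
    proof (cases "s < t")
      case True
      then have "cf (h 0) (h s) (h t) = 0" using colh[of 0 s t] that c0 K by auto
        then have "E (L s) (W 0 t)" unfolding L_def W_def by (rule cf0)
        then show ?thesis using True by simp
    next
      case False
      then show ?thesis using Wtop[of 0 t] Wnadj[of 0 t s] that K by (cases "s = t") auto
    qed
    have "\<exists>f. induced_embedding half_graph_edge (half_graph_vertices a) E (A \<union> B) f"
    proof (rule half_from[OF bg, of a L "\<lambda>t. W 0 t"])
      show "\<And>s. s \<in> {1..a} \<Longrightarrow> L s \<in> A" using LA K by auto
      show "\<And>t. t \<in> {1..a} \<Longrightarrow> W 0 t \<in> B" using WB K by auto
      show "inj_on L {1..a}" using LinjI[of a 0] K by simp
      show "\<And>s t. s \<in> {1..a} \<Longrightarrow> t \<in> {1..a} \<Longrightarrow> E (L s) (W 0 t) = (s \<le> t)" by (rule adj)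
    qed
    then show ?thesis ..
  next
    assume c2: "c = 2"
    have adj: "E (L (s-1)) (W (t-1) a) \<longleftrightarrow> s \<le> t" if "s \<in> {1..a}" "t \<in> {1..a}" for s t
    proof (cases "s < t")
      case True
      then have "cf (h (s-1)) (h (t-1)) (h a) = 2" using colh[of "s-1" "t-1" a] that c2 K by auto
        then have "E (L (s-1)) (W (t-1) a)" unfolding L_def W_def using cf2 by blast
        then show ?thesis using True by simp
    next
      case False
      show ?thesis
      proof (cases "s = t")
        case True
        then show ?thesis using Wadj[of "t-1" a] that K by auto
      next
        case ne: False
        then have "cf (h (t-1)) (h (s-1)) (h a) = 2" using colh[of "t-1" "s-1" a] that c2 K False by auto
        then have "\<not> E (L (s-1)) (W (t-1) a)" unfolding L_def W_def using cf2 by blast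
        then show ?thesis using ne False by simp
      qed
    qed
    have "\<exists>f. induced_embedding half_graph_edge (half_graph_vertices a) E (A \<union> B) f"
    proof (rule half_from[OF bg, of a "\<lambda>s. L (s-1)" "\<lambda>t. W (t-1) a"])
      show "\<And>s. s \<in> {1..a} \<Longrightarrow> L (s-1) \<in> A" using LA K by auto
      show "\<And>t. t \<in> {1..a} \<Longrightarrow> W (t-1) a \<in> B" using WB K by auto
      show "inj_on (\<lambda>s. L (s-1)) {1..a}" using LinjI[of a 1] K by simp
      show "\<And>s t. s \<in> {1..a} \<Longrightarrow> t \<in> {1..a} \<Longrightarrow> E (L (s-1)) (W (t-1) a) = (s \<le> t)" by (rule adj)
    qed
    then show ?thesis ..
  next
    assume c1: "c = 1"
    have adj: "E (L (k-1)) (W (i-1) (j-1)) \<longleftrightarrow> (k = i \<or> k = j)"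
      if "k \<in> {1..b}" "1 \<le> i" "i < j" "j \<le> b" for k i j
    proof -
      consider "k < i" | "k = i" | "i < k \<and> k < j" | "k = j" | "j < k" by linarith
      then show ?thesis
      proof cases
        case 1
        then have "cf (h (k-1)) (h (i-1)) (h (j-1)) = 1" using colh[of "k-1" "i-1" "j-1"] that c1 K by auto
        then have "\<not> E (L (k-1)) (W (i-1) (j-1))" unfolding L_def W_def using cf1 by blast
        then show ?thesis using 1 that by simp
      next
        case 2
        then show ?thesis using Wadj[of "i-1" "j-1"] that K by auto
      next
        case 3
        then have "cf (h (i-1)) (h (k-1)) (h (j-1)) = 1" using colh[of "i-1" "k-1" "j-1"] that c1 K by auto
        then have "\<not> E (L (k-1)) (W (i-1) (j-1))" unfolding L_def W_def using cf1 by blast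
        then show ?thesis using 3 that by simp
      next
        case 4
        then show ?thesis using Wtop[of "i-1" "j-1"] that K by auto
      next
        case 5
        then show ?thesis using Wnadj[of "i-1" "j-1" "k-1"] that K by auto
      qed
    qed
    have "\<exists>f. induced_embedding subdiv_edge (subdiv_vertices b) E (A \<union> B) f \<and>
           (\<forall>i\<in>{1..b}. f (Inl i) \<in> A)"
    proof (rule subdiv_from[OF bg, of b "\<lambda>s. L (s-1)" "\<lambda>i j. W (i-1) (j-1)"])
      show "\<And>s. s \<in> {1..b} \<Longrightarrow> L (s-1) \<in> A" using LA K by auto
      show "\<And>i j. 1 \<le> i \<Longrightarrow> i < j \<Longrightarrow> j \<le> b \<Longrightarrow> W (i-1) (j-1) \<in> B" using WB K by auto
      show "inj_on (\<lambda>s. L (s-1)) {1..b}" using LinjI[of b 1] K by simp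
      show "\<And>k i j. k \<in> {1..b} \<Longrightarrow> 1 \<le> i \<Longrightarrow> i < j \<Longrightarrow> j \<le> b \<Longrightarrow> E (L (k-1)) (W (i-1) (j-1)) = (k = i \<or> k = j)" by (rule adj)
    qed
    then show ?thesis ..
  qed
qed

theorem lemma4p11:
  shows "\<exists>\<beta> :: nat \<Rightarrow> nat \<Rightarrow> nat.
    \<forall>(A :: nat set) (B :: nat set) (E :: nat \<Rightarrow> nat \<Rightarrow> bool) (m :: nat)
      (l :: nat \<Rightarrow> nat) (P :: nat \<Rightarrow> nat set) (a :: nat) (b :: nat).
      bipartite_graph A B E \<and>
      inj_on l {1..m} \<and> A = l ` {1..m} \<and>
      (\<forall>i\<in>{1..m}. P i \<noteq> {}) \<and>
      (\<forall>i\<in>{1..m}. \<forall>j\<in>{1..m}. i \<noteq> j \<longrightarrow> P i \<inter> P j = {}) \<and>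
      (\<Union>i\<in>{1..m}. P i) = B \<and>
      (\<forall>i\<in>{1..m}. P i \<subseteq> nbhd E (l i)) \<and>
      (\<forall>i\<in>{1..m}. \<forall>j\<in>{1..m}. j < i \<longrightarrow> nbhd E (l i) \<inter> P j = {}) \<and>
      (\<forall>i\<in>{1..m}. \<forall>j\<in>{1..m}. i < j \<longrightarrow> nbhd E (l i) \<inter> P j \<noteq> {}) \<and>
      m > \<beta> a b
      \<longrightarrow>
      (\<exists>f. induced_embedding half_graph_edge (half_graph_vertices a) E (A \<union> B) f) \<or>
      (\<exists>f. induced_embedding subdiv_edge (subdiv_vertices b) E (A \<union> B) f \<and>
           (\<forall>i\<in>{1..b}. f (Inl i) \<in> A))"
proof -
  define \<beta> where "\<beta> a b = (SOME N::nat. partn_lst {..<N} [a+b+1, a+b+1, a+b+1] 3)" for a b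
  have R: "partn_lst {..<\<beta> a b} [a+b+1, a+b+1, a+b+1] 3" for a b
    unfolding \<beta>_def by (rule someI_ex[OF ramsey_full])
  show ?thesis
  proof (rule exI[of _ \<beta>], intro allI impI, elim conjE)
    fix A B E m l P a b
    assume h: "bipartite_graph A B E" "inj_on l {1..m}" "A = l ` {1..m}"
      "\<forall>i\<in>{1..m}. P i \<noteq> {}"
      "\<forall>i\<in>{1..m}. \<forall>j\<in>{1..m}. i \<noteq> j \<longrightarrow> P i \<inter> P j = {}"
      "(\<Union>i\<in>{1..m}. P i) = B"
      "\<forall>i\<in>{1..m}. P i \<subseteq> nbhd E (l i)"
      "\<forall>i\<in>{1..m}. \<forall>j\<in>{1..m}. j < i \<longrightarrow> nbhd E (l i) \<inter> P j = {}"
      "\<forall>i\<in>{1..m}. \<forall>j\<in>{1..m}. i < j \<longrightarrow> nbhd E (l i) \<inter> P j \<noteq> {}"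
      "\<beta> a b < m"
    show "(\<exists>f. induced_embedding half_graph_edge (half_graph_vertices a) E (A \<union> B) f) \<or>
      (\<exists>f. induced_embedding subdiv_edge (subdiv_vertices b) E (A \<union> B) f \<and>
           (\<forall>i\<in>{1..b}. f (Inl i) \<in> A))"
      by (rule main_core[OF R refl h(1,2,3,5,6,7,8,9,10)])
  qed
qed

end
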